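(* Let $c\in\mathbb{R}\setminus\{0\}$, $b>0$, $d\ge1$, and let $X=(\mathbb{R}/(b/c)\mathbb{Z})\times(\mathbb{R}/b\mathbb{Z})$ be the torus with coordinates $(t,x)$ (periodic in $t$ with period $b/c$ and in $x$ with period $b$). Let $W=C^1(X,\mathbb{R}^d)$ and let $\Sigma=\{u\in W\mid u(t+s,x+cs)=u(t,x)\ \text{for all } s\in\mathbb{R},(t,x)\in X\}$ be the travelling waves with wave speed $c$. Let $L\colon(\mathbb{R}^d)^3\to\mathbb{R}$ be an autonomous Lagrangian such that the action functional $S\colon W\to\mathbb{R}$, $$S(u)=\int_0^{b/c}\int_0^b L\big(u(t,x),u_t(t,x),u_x(t,x)\big)\,\mathrm{d}x\,\mathrm{d}t,$$ is continuously differentiable, and let $S_\Sigma\colon\Sigma\to\mathbb{R}$ be its restriction to $\Sigma$. Then a travelling wave $u\in\Sigma$ is a stationary point of $S$ if and only if $u$ is a stationary point of $S_\Sigma$. Moreover, using the identification $\Sigma\cong C^1(\mathbb{R}/b\mathbb{Z},\mathbb{R}^d)$ given by $u(t,x)=f(x-ct)=f(\xi)$, one has $$S_\Sigma(f)=\frac bc\int_0^b L\big(f(\xi),-cf_\xi(\xi),f_\xi(\xi)\big)\,\mathrm{d}\xi .$$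
   Context: A stationary point of $S$ (resp. $S_\Sigma$) is a point at which the derivative of $S$ vanishes in all directions of $W$ (resp. in all directions tangent to the linear subspace $\Sigma$). "Autonomous" means $L$ depends only on $(u,u_t,u_x)$ and not explicitly on $(t,x)$. *)

theory Defs
  imports "HOL-Analysis.Analysis"
begin

(* Functions on the torus X = (R/(b/c)Z) x (R/bZ) are represented as doubly periodic
   functions u :: real \<times> real \<Rightarrow> real^'d with coordinates (t,x). *)

definition pd_t :: "(real \<times> real \<Rightarrow> 'a::real_normed_vector) \<Rightarrow> real \<times> real \<Rightarrow> 'a" where
  "pd_t u p = frechet_derivative u (at p) (1, 0)"

definition pd_x :: "(real \<times> real \<Rightarrow> 'a::real_normed_vector) \<Rightarrow> real \<times> real \<Rightarrow> 'a" where
  "pd_x u p = frechet_derivative u (at p) (0, 1)"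

definition W :: "real \<Rightarrow> real \<Rightarrow> (real \<times> real \<Rightarrow> real^'d) set" where
  "W b c = {u. (\<forall>t x. u (t + b / c, x) = u (t, x) \<and> u (t, x + b) = u (t, x))
              \<and> (\<forall>p. u differentiable (at p))
              \<and> continuous_on UNIV (pd_t u) \<and> continuous_on UNIV (pd_x u)}"

definition Sigma_tw :: "real \<Rightarrow> real \<Rightarrow> (real \<times> real \<Rightarrow> real^'d) set" where
  "Sigma_tw b c = {u \<in> W b c. \<forall>s t x. u (t + s, x + c * s) = u (t, x)}"

definition c1norm :: "(real \<times> real \<Rightarrow> real^'d) \<Rightarrow> real" where
  "c1norm u = (SUP p. norm (u p)) + (SUP p. norm (pd_t u p)) + (SUP p. norm (pd_x u p))"

definition oint :: "real \<Rightarrow> real \<Rightarrow> (real \<Rightarrow> real) \<Rightarrow> real" where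
  "oint a b g = (if a \<le> b then integral {a..b} g else - integral {b..a} g)"

definition action :: "real \<Rightarrow> real \<Rightarrow> ((real^'d) \<times> (real^'d) \<times> (real^'d) \<Rightarrow> real)
                       \<Rightarrow> (real \<times> real \<Rightarrow> real^'d) \<Rightarrow> real" where
  "action b c L u = oint 0 (b / c)
     (\<lambda>t. oint 0 b (\<lambda>x. L (u (t, x), pd_t u (t, x), pd_x u (t, x))))"

definition frechet_on_W ::
  "real \<Rightarrow> real \<Rightarrow> ((real \<times> real \<Rightarrow> real^'d) \<Rightarrow> real) \<Rightarrow> (real \<times> real \<Rightarrow> real^'d)
     \<Rightarrow> ((real \<times> real \<Rightarrow> real^'d) \<Rightarrow> real) \<Rightarrow> bool" where
  "frechet_on_W b c F u D \<longleftrightarrow>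
     (\<forall>v\<in>W b c. \<forall>w\<in>W b c. D (\<lambda>p. v p + w p) = D v + D w)
   \<and> (\<forall>v\<in>W b c. \<forall>a::real. D (\<lambda>p. a *\<^sub>R v p) = a * D v)
   \<and> (\<exists>K. \<forall>v\<in>W b c. \<bar>D v\<bar> \<le> K * c1norm v)
   \<and> (\<forall>e>0. \<exists>\<delta>>0. \<forall>v\<in>W b c. c1norm v < \<delta> \<longrightarrow>
          \<bar>F (\<lambda>p. u p + v p) - F u - D v\<bar> \<le> e * c1norm v)"

definition C1_on_W :: "real \<Rightarrow> real \<Rightarrow> ((real \<times> real \<Rightarrow> real^'d) \<Rightarrow> real) \<Rightarrow> bool" where
  "C1_on_W b c F \<longleftrightarrow>
     (\<exists>DF. (\<forall>u\<in>W b c. frechet_on_W b c F u (DF u))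
         \<and> (\<forall>u\<in>W b c. \<forall>e>0. \<exists>\<delta>>0. \<forall>w\<in>W b c. c1norm (\<lambda>p. w p - u p) < \<delta> \<longrightarrow>
               (\<forall>v\<in>W b c. \<bar>DF w v - DF u v\<bar> \<le> e * c1norm v)))"

definition stationary_on :: "(real \<times> real \<Rightarrow> real^'d) set \<Rightarrow> ((real \<times> real \<Rightarrow> real^'d) \<Rightarrow> real)
     \<Rightarrow> (real \<times> real \<Rightarrow> real^'d) \<Rightarrow> bool" where
  "stationary_on V F u \<longleftrightarrow> u \<in> V \<and>
     (\<forall>v\<in>V. ((\<lambda>\<epsilon>. F (\<lambda>p. u p + \<epsilon> *\<^sub>R v p)) has_real_derivative 0) (at 0))"

definition C1_per :: "real \<Rightarrow> (real \<Rightarrow> real^'d) set" where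
  "C1_per b = {f. (\<forall>\<xi>. f (\<xi> + b) = f \<xi>) \<and> (\<forall>\<xi>. f differentiable (at \<xi>))
                 \<and> continuous_on UNIV (\<lambda>\<xi>. vector_derivative f (at \<xi>))}"

end

theory Submission
  imports Defs
begin


lemma per_int:
  fixes g :: "real \<Rightarrow> 'a"
  assumes "\<forall>y. g (y + P) = g y"
  shows "g (y + real_of_int k * P) = g y"
proof -
  have pos: "g (y + real n * P) = g y" for n :: nat and y
    by (induction n arbitrary: y) (auto simp: distrib_right assms add.assoc[symmetric])
  show ?thesis
  proof (cases "k \<ge> 0")
    case True
    then show ?thesis using pos[where n="nat k" and y=y] by simp
  next
    case False
    have "g (y + real_of_int k * P) = g (y + real_of_int k * P + real (nat (-k)) * P)"
      using pos by simp
    also have "y + real_of_int k * P + real (nat (-k)) * P = y" using False by simp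
    finally show ?thesis .
  qed
qed

lemma periodic_integral_pos:
  fixes g :: "real \<Rightarrow> 'a::banach"
  assumes P: "P > 0" and per: "\<forall>y. g (y + P) = g y"
  shows "integral {a..a+P} g = integral {0..P} g"
proof -
  define k where "k = floor (a / P)"
  define a' where "a' = a - real_of_int k * P"
  have k1: "real_of_int k \<le> a / P" unfolding k_def by simp
  have k2: "a / P < real_of_int k + 1" unfolding k_def by linarith
  have a'0: "0 \<le> a'" using k1 P unfolding a'_def by (simp add: field_simps)
  have a'P: "a' \<le> P" using k2 P unfolding a'_def by (simp add: field_simps)
  have gk: "g \<circ> (+) (real_of_int k * P) = g"
    using per_int[OF per] by (auto simp: add.commute)
  have "integral {a'..a'+P} g = integral {a'..a'+P} (g \<circ> (+) (real_of_int k * P))"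
    by (simp add: gk)
  also have "\<dots> = integral {a..a+P} g"
    by (subst integral_shift_Icc_real) (simp add: a'_def algebra_simps)
  finally have 1: "integral {a..a+P} g = integral {a'..a'+P} g" by simp
  have gP: "g \<circ> (+) P = g" using per by (auto simp: add.commute)
  have sh: "integral {0..a'} g = integral {P..a'+P} g"
    using integral_shift_Icc_real[of 0 a' g P] by (simp add: gP add.commute)
  have shi: "g integrable_on {0..a'} \<longleftrightarrow> g integrable_on {P..a'+P}"
    using integrable_on_shift_Icc_real[of g P 0 a'] by (simp add: gP add.commute)
  have 2: "integral {a'..a'+P} g = integral {0..P} g"
  proof (cases "g integrable_on {0..P}")
    case True
    have i1: "g integrable_on {a'..P}" using a'0 by (intro integrable_subinterval_real[OF True]) auto
    have i2: "g integrable_on {0..a'}" using a'P by (intro integrable_subinterval_real[OF True]) auto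
    have i3: "g integrable_on {a'..a'+P}"
      using Henstock_Kurzweil_Integration.integrable_combine[OF a'P _ i1] i2 shi a'0 by simp
    have "integral {a'..a'+P} g = integral {a'..P} g + integral {P..a'+P} g"
      using Henstock_Kurzweil_Integration.integral_combine[OF a'P _ i3] a'0 by simp
    also have "\<dots> = integral {a'..P} g + integral {0..a'} g" using sh by simp
    also have "\<dots> = integral {0..P} g"
      using Henstock_Kurzweil_Integration.integral_combine[OF a'0 a'P True] by (simp add: add.commute)
    finally show ?thesis .
  next
    case False
    have "\<not> g integrable_on {a'..a'+P}"
    proof
      assume i3: "g integrable_on {a'..a'+P}"
      have i1: "g integrable_on {a'..P}" using a'0 a'P by (intro integrable_subinterval_real[OF i3]) auto
      have i2: "g integrable_on {P..a'+P}" using a'P by (intro integrable_subinterval_real[OF i3]) auto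
      have "g integrable_on {0..P}"
        using Henstock_Kurzweil_Integration.integrable_combine[OF a'0 a'P _ i1] i2 shi by simp
      then show False using False by simp
    qed
    then show ?thesis using False by (simp add: not_integrable_integral)
  qed
  show ?thesis using 1 2 by simp
qed

lemma periodic_integral:
  fixes g :: "real \<Rightarrow> 'a::banach"
  assumes P: "P \<noteq> 0" and per: "\<forall>y. g (y + P) = g y"
  shows "integral {a..a+\<bar>P\<bar>} g = integral {0..\<bar>P\<bar>} g"
proof -
  have "\<forall>y. g (y + \<bar>P\<bar>) = g y"
  proof (cases "P > 0")
    case True then show ?thesis using per by simp
  next
    case False
    then show ?thesis using per_int[OF per, of _ "-1"] by simp
  qed
  then show ?thesis using periodic_integral_pos[of "\<bar>P\<bar>" g a] P by simp
qed



lemma fd_shift: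
  assumes "h differentiable (at (p + a))"
  shows "frechet_derivative (\<lambda>q. h (q + a)) (at p) = frechet_derivative h (at (p + a))"
proof -
  have d: "(h has_derivative frechet_derivative h (at (p + a))) (at (p + a))"
    using assms frechet_derivative_works by blast
  have s: "((\<lambda>q. q + a) has_derivative (\<lambda>q. q)) (at p)"
    by (auto intro!: derivative_eq_intros)
  have "((\<lambda>q. h (q + a)) has_derivative frechet_derivative h (at (p + a))) (at p)"
    using diff_chain_at[OF s d] by (simp add: o_def)
  then show ?thesis by (rule frechet_derivative_at[symmetric])
qed

lemma fd_lin:
  assumes "u differentiable (at p)" "v differentiable (at p)"
  shows "frechet_derivative (\<lambda>q. u q + r *\<^sub>R v q) (at p)
       = (\<lambda>h. frechet_derivative u (at p) h + r *\<^sub>R frechet_derivative v (at p) h)"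
proof -
  have "((\<lambda>q. u q + r *\<^sub>R v q) has_derivative
      (\<lambda>h. frechet_derivative u (at p) h + r *\<^sub>R frechet_derivative v (at p) h)) (at p)"
    using assms[unfolded frechet_derivative_works]
    by (auto intro!: derivative_eq_intros)
  then show ?thesis by (rule frechet_derivative_at[symmetric])
qed

lemma fd_scale:
  assumes "v differentiable (at p)"
  shows "frechet_derivative (\<lambda>q. r *\<^sub>R v q) (at p)
       = (\<lambda>h. r *\<^sub>R frechet_derivative v (at p) h)"
proof -
  have "((\<lambda>q. r *\<^sub>R v q) has_derivative
      (\<lambda>h. r *\<^sub>R frechet_derivative v (at p) h)) (at p)"
    using assms[unfolded frechet_derivative_works]
    by (auto intro!: derivative_eq_intros)
  then show ?thesis by (rule frechet_derivative_at[symmetric])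
qed

lemma fd_sum:
  assumes "finite K" "\<And>k. k \<in> K \<Longrightarrow> f k differentiable (at p)"
  shows "frechet_derivative (\<lambda>q. \<Sum>k\<in>K. f k q) (at p)
       = (\<lambda>h. \<Sum>k\<in>K. frechet_derivative (f k) (at p) h)"
proof -
  have "((\<lambda>q. \<Sum>k\<in>K. f k q) has_derivative
      (\<lambda>h. \<Sum>k\<in>K. frechet_derivative (f k) (at p) h)) (at p)"
    using assms frechet_derivative_works
    by (auto intro!: derivative_eq_intros)
  then show ?thesis by (rule frechet_derivative_at[symmetric])
qed

lemma diff_sum:
  assumes "finite K" "\<And>k. k \<in> K \<Longrightarrow> f k differentiable (at p)"
  shows "(\<lambda>q. \<Sum>k\<in>K. f k q) differentiable (at p)"
proof -
  have "((\<lambda>q. \<Sum>k\<in>K. f k q) has_derivative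
      (\<lambda>h. \<Sum>k\<in>K. frechet_derivative (f k) (at p) h)) (at p)"
    using assms frechet_derivative_works
    by (auto intro!: derivative_eq_intros)
  then show ?thesis by (rule differentiableI)
qed

definition per :: "real \<Rightarrow> real \<Rightarrow> (real \<times> real \<Rightarrow> 'a) \<Rightarrow> bool" where
  "per b c w \<longleftrightarrow> (\<forall>t x. w (t + b / c, x) = w (t, x) \<and> w (t, x + b) = w (t, x))"

lemma W_iff: "u \<in> W b c \<longleftrightarrow> per b c u \<and> (\<forall>p. u differentiable (at p))
   \<and> continuous_on UNIV (pd_t u) \<and> continuous_on UNIV (pd_x u)"
  unfolding W_def per_def by auto

lemma per_vec:
  assumes "per b c w"
  shows "w (p + (real_of_int k * (b / c), real_of_int j * b)) = w p"
proof -
  obtain t x where p: "p = (t, x)" by fastforce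
  have 1: "w (y + real_of_int k * (b/c), x') = w (y, x')" for y x'
    using per_int[of "\<lambda>y. w (y, x')" "b/c" y k] assms unfolding per_def by auto
  have 2: "w (t', y + real_of_int j * b) = w (t', y)" for y t'
    using per_int[of "\<lambda>y. w (t', y)" "b" y j] assms unfolding per_def by auto
  show ?thesis using 1 2 p by simp
qed

lemma per_tau:
  assumes "per b c w" "c \<noteq> 0" "b > 0"
  shows "w (p + (\<bar>b / c\<bar>, c * \<bar>b / c\<bar>)) = w p"
proof (cases "c > 0")
  case True
  then have "(\<bar>b / c\<bar>, c * \<bar>b / c\<bar>) = (real_of_int 1 * (b / c), real_of_int 1 * b)"
    using assms by simp
  then show ?thesis using per_vec[OF assms(1), of p 1 1] assms by simp
next
  case False
  then have "(\<bar>b / c\<bar>, c * \<bar>b / c\<bar>) = (real_of_int (-1) * (b / c), real_of_int (-1) * b)"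
    using assms by (simp add: abs_if divide_less_0_iff)
  then show ?thesis using per_vec[OF assms(1), of p "-1" "-1"] assms by simp
qed

lemma per_shift: "per b c w \<Longrightarrow> per b c (\<lambda>q. w (q + a))"
proof -
  assume h: "per b c w"
  obtain a1 a2 where a: "a = (a1, a2)" by fastforce
  have "w (t + b / c + a1, x + a2) = w (t + a1, x + a2)" for t x
    using h unfolding per_def by (metis add.commute add.left_commute)
  moreover have "w (t + a1, x + b + a2) = w (t + a1, x + a2)" for t x
    using h unfolding per_def by (metis add.commute add.left_commute)
  ultimately show ?thesis unfolding per_def a by simp
qed

lemma pd_t_shift: "(\<forall>p. h differentiable (at p)) \<Longrightarrow> pd_t (\<lambda>q. h (q + a)) p = pd_t h (p + a)"
  unfolding pd_t_def using fd_shift by metis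

lemma pd_x_shift: "(\<forall>p. h differentiable (at p)) \<Longrightarrow> pd_x (\<lambda>q. h (q + a)) p = pd_x h (p + a)"
  unfolding pd_x_def using fd_shift by metis

lemma per_pd:
  assumes "u \<in> W b c"
  shows "per b c (pd_t u)" "per b c (pd_x u)"
proof -
  have d: "\<forall>p. u differentiable (at p)" using assms unfolding W_iff by blast
  have pu: "per b c u" using assms unfolding W_iff by blast
  have e1: "(\<lambda>q. u (q + (b/c, 0))) = u" and e2: "(\<lambda>q. u (q + (0, b))) = u"
    using pu unfolding per_def by auto
  have "pd_t u (p + (b/c,0)) = pd_t u p" "pd_t u (p + (0,b)) = pd_t u p"
       "pd_x u (p + (b/c,0)) = pd_x u p" "pd_x u (p + (0,b)) = pd_x u p" for p
    using pd_t_shift[OF d, of "(b/c,0)" p] pd_t_shift[OF d, of "(0,b)" p]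
      pd_x_shift[OF d, of "(b/c,0)" p] pd_x_shift[OF d, of "(0,b)" p] e1 e2 by simp_all
  then show "per b c (pd_t u)" "per b c (pd_x u)" unfolding per_def by auto
qed

lemma W_shift:
  assumes "u \<in> W b c" shows "(\<lambda>q. u (q + a)) \<in> W b c"
proof -
  have d: "\<forall>p. u differentiable (at p)" using assms unfolding W_iff by blast
  have d2: "\<forall>p. (\<lambda>q. u (q + a)) differentiable (at p)"
  proof
    fix p
    have "((\<lambda>q. q + a) has_derivative (\<lambda>q. q)) (at p)"
      by (auto intro!: derivative_eq_intros)
    then have "(\<lambda>q. q + a) differentiable (at p)" by (auto simp: differentiable_def)
    then show "(\<lambda>q. u (q + a)) differentiable (at p)"
      using differentiable_chain_at[of "\<lambda>q. q + a" p u] d by (simp add: o_def)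
  qed
  have cs: "continuous_on UNIV (\<lambda>p::real\<times>real. p + a)" by (intro continuous_intros)
  have "pd_t (\<lambda>q. u (q + a)) = pd_t u \<circ> (\<lambda>p. p + a)" by (rule ext) (simp add: pd_t_shift[OF d])
  then have c1: "continuous_on UNIV (pd_t (\<lambda>q. u (q + a)))"
    using assms W_iff continuous_on_compose[OF cs] by (metis continuous_on_subset subset_UNIV)
  have "pd_x (\<lambda>q. u (q + a)) = pd_x u \<circ> (\<lambda>p. p + a)" by (rule ext) (simp add: pd_x_shift[OF d])
  then have c2: "continuous_on UNIV (pd_x (\<lambda>q. u (q + a)))"
    using assms W_iff continuous_on_compose[OF cs] by (metis continuous_on_subset subset_UNIV)
  show ?thesis using per_shift d2 c1 c2 assms W_iff by blast
qed

lemma pd_t_lin: "u differentiable (at p) \<Longrightarrow> v differentiable (at p) \<Longrightarrow>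
   pd_t (\<lambda>q. u q + r *\<^sub>R v q) p = pd_t u p + r *\<^sub>R pd_t v p"
  unfolding pd_t_def by (simp add: fd_lin)
lemma pd_x_lin: "u differentiable (at p) \<Longrightarrow> v differentiable (at p) \<Longrightarrow>
   pd_x (\<lambda>q. u q + r *\<^sub>R v q) p = pd_x u p + r *\<^sub>R pd_x v p"
  unfolding pd_x_def by (simp add: fd_lin)
lemma pd_t_scale: "v differentiable (at p) \<Longrightarrow> pd_t (\<lambda>q. r *\<^sub>R v q) p = r *\<^sub>R pd_t v p"
  unfolding pd_t_def by (simp add: fd_scale)
lemma pd_x_scale: "v differentiable (at p) \<Longrightarrow> pd_x (\<lambda>q. r *\<^sub>R v q) p = r *\<^sub>R pd_x v p"
  unfolding pd_x_def by (simp add: fd_scale)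
lemma pd_t_sum: "finite K \<Longrightarrow> (\<And>k. k \<in> K \<Longrightarrow> f k differentiable (at p)) \<Longrightarrow>
   pd_t (\<lambda>q. \<Sum>k\<in>K. f k q) p = (\<Sum>k\<in>K. pd_t (f k) p)"
  unfolding pd_t_def by (simp add: fd_sum)
lemma pd_x_sum: "finite K \<Longrightarrow> (\<And>k. k \<in> K \<Longrightarrow> f k differentiable (at p)) \<Longrightarrow>
   pd_x (\<lambda>q. \<Sum>k\<in>K. f k q) p = (\<Sum>k\<in>K. pd_x (f k) p)"
  unfolding pd_x_def by (simp add: fd_sum)

lemma W_lin:
  assumes "u \<in> W b c" "v \<in> W b c" shows "(\<lambda>q. u q + r *\<^sub>R v q) \<in> W b c"
proof -
  have du: "\<forall>p. u differentiable (at p)" using assms unfolding W_iff by blast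
  have dv: "\<forall>p. v differentiable (at p)" using assms unfolding W_iff by blast
  have d: "\<forall>p. (\<lambda>q. u q + r *\<^sub>R v q) differentiable (at p)"
    using du dv by (auto intro!: derivative_intros)
  have "pd_t (\<lambda>q. u q + r *\<^sub>R v q) = (\<lambda>p. pd_t u p + r *\<^sub>R pd_t v p)"
    using pd_t_lin du dv by blast
  moreover have "continuous_on UNIV (\<lambda>p. pd_t u p + r *\<^sub>R pd_t v p)"
    using assms unfolding W_iff by (intro continuous_intros) auto
  ultimately have ct: "continuous_on UNIV (pd_t (\<lambda>q. u q + r *\<^sub>R v q))" by simp
  have "pd_x (\<lambda>q. u q + r *\<^sub>R v q) = (\<lambda>p. pd_x u p + r *\<^sub>R pd_x v p)"
    using pd_x_lin du dv by blast
  moreover have "continuous_on UNIV (\<lambda>p. pd_x u p + r *\<^sub>R pd_x v p)"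
    using assms unfolding W_iff by (intro continuous_intros) auto
  ultimately have "continuous_on UNIV (pd_x (\<lambda>q. u q + r *\<^sub>R v q))" by simp
  moreover have "per b c (\<lambda>q. u q + r *\<^sub>R v q)"
    using assms unfolding W_iff per_def by simp
  ultimately show ?thesis using d ct W_iff by blast
qed

lemma W_scale:
  assumes "v \<in> W b c" shows "(\<lambda>q. r *\<^sub>R v q) \<in> W b c"
proof -
  have dv: "\<forall>p. v differentiable (at p)" using assms unfolding W_iff by blast
  have d: "\<forall>p. (\<lambda>q. r *\<^sub>R v q) differentiable (at p)"
    using dv by (auto intro!: derivative_intros)
  have "pd_t (\<lambda>q. r *\<^sub>R v q) = (\<lambda>p. r *\<^sub>R pd_t v p)" using pd_t_scale dv by blast
  moreover have "continuous_on UNIV (\<lambda>p. r *\<^sub>R pd_t v p)"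
    using assms unfolding W_iff by (intro continuous_intros) auto
  ultimately have ct: "continuous_on UNIV (pd_t (\<lambda>q. r *\<^sub>R v q))" by simp
  have "pd_x (\<lambda>q. r *\<^sub>R v q) = (\<lambda>p. r *\<^sub>R pd_x v p)" using pd_x_scale dv by blast
  moreover have "continuous_on UNIV (\<lambda>p. r *\<^sub>R pd_x v p)"
    using assms unfolding W_iff by (intro continuous_intros) auto
  ultimately have "continuous_on UNIV (pd_x (\<lambda>q. r *\<^sub>R v q))" by simp
  moreover have "per b c (\<lambda>q. r *\<^sub>R v q)"
    using assms unfolding W_iff per_def by simp
  ultimately show ?thesis using d ct W_iff by blast
qed

lemma W_zero: "(\<lambda>q. 0) \<in> W b c"
  unfolding W_def pd_t_def pd_x_def by auto

lemma W_sum: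
  assumes "finite K" "\<And>k. k \<in> K \<Longrightarrow> f k \<in> W b c"
  shows "(\<lambda>q. \<Sum>k\<in>K. f k q) \<in> W b c"
  using assms
proof (induction K rule: finite_induct)
  case empty then show ?case using W_zero by simp
next
  case (insert k K)
  have "(\<lambda>q. f k q + 1 *\<^sub>R (\<Sum>k\<in>K. f k q)) \<in> W b c"
    using insert by (intro W_lin) auto
  then show ?case using insert by simp
qed



lemma per_abs:
  assumes "per b c w" "c \<noteq> 0"
  shows "w (q + (real_of_int m * \<bar>b / c\<bar>, real_of_int n * b)) = w q"
proof (cases "b / c \<ge> 0")
  case True
  then have "\<bar>b / c\<bar> = b / c" using abs_of_nonneg by blast
  then show ?thesis using per_vec[OF assms(1), of q m n] by simp
next
  case False
  then have "\<bar>b / c\<bar> = - (b / c)" using abs_of_neg by (metis not_le)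
  then have "real_of_int m * \<bar>b / c\<bar> = real_of_int (-m) * (b / c)" by simp
  then show ?thesis using per_vec[OF assms(1), of q "-m" n] by simp
qed

lemma per_reduce:
  assumes "c \<noteq> 0" "b > 0"
  shows "\<exists>a. p + a \<in> cbox (0,0) (\<bar>b/c\<bar>, b) \<and> (\<forall>w::real\<times>real\<Rightarrow>'a. per b c w \<longrightarrow> (\<forall>q. w (q + a) = w q))"
proof -
  define P where "P = \<bar>b/c\<bar>"
  have P: "P > 0" using assms by (simp add: P_def)
  obtain t x where p: "p = (t, x)" by fastforce
  define m where "m = - floor (t / P)"
  define n where "n = - floor (x / b)"
  define a where "a = (real_of_int m * P, real_of_int n * b)"
  have "real_of_int (floor (t/P)) * P \<le> t" "t < (real_of_int (floor (t/P)) + 1) * P"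
    using P floor_divide_lower floor_divide_upper by blast+
  then have t1: "0 \<le> t + real_of_int m * P" "t + real_of_int m * P \<le> P"
    unfolding m_def by (simp_all add: algebra_simps)
  have "real_of_int (floor (x/b)) * b \<le> x" "x < (real_of_int (floor (x/b)) + 1) * b"
    using assms floor_divide_lower floor_divide_upper by blast+
  then have x1: "0 \<le> x + real_of_int n * b" "x + real_of_int n * b \<le> b"
    unfolding n_def by (simp_all add: algebra_simps)
  have "p + a \<in> cbox (0,0) (\<bar>b/c\<bar>, b)"
    using t1 x1 unfolding p a_def P_def by (simp add: cbox_Pair_eq)
  moreover have "\<forall>w::real\<times>real\<Rightarrow>'a. per b c w \<longrightarrow> (\<forall>q. w (q + a) = w q)"
    using per_abs assms unfolding a_def P_def by blast
  ultimately show ?thesis by blast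
qed

lemma per_bounded:
  fixes w :: "real \<times> real \<Rightarrow> 'a::real_normed_vector"
  assumes "per b c w" "continuous_on UNIV w" "c \<noteq> 0" "b > 0"
  shows "\<exists>M. \<forall>p. norm (w p) \<le> M"
proof -
  have "compact (w ` cbox (0,0) (\<bar>b/c\<bar>, b))"
    using assms by (intro compact_continuous_image) (auto intro: continuous_on_subset)
  then obtain M where M: "\<forall>y\<in>w ` cbox (0,0) (\<bar>b/c\<bar>, b). norm y \<le> M"
    using compact_imp_bounded bounded_iff by metis
  have "norm (w p) \<le> M" for p
  proof -
    obtain a where a: "p + a \<in> cbox (0,0) (\<bar>b/c\<bar>, b)" "\<forall>q. w (q + a) = w q"
      using per_reduce[OF assms(3,4), of p] assms(1) by blast
    then show ?thesis using M by (metis image_eqI)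
  qed
  then show ?thesis by blast
qed

lemma per_unif:
  fixes w :: "real \<times> real \<Rightarrow> 'a::real_normed_vector"
  assumes "per b c w" "continuous_on UNIV w" "c \<noteq> 0" "b > 0" "e > 0"
  shows "\<exists>d>0. \<forall>p q. dist p q < d \<longrightarrow> dist (w p) (w q) < e"
proof -
  define Q where "Q = cbox (-1,-1) (\<bar>b/c\<bar>+1, b+1)"
  have "uniformly_continuous_on Q w"
    using assms unfolding Q_def by (intro compact_uniformly_continuous) (auto intro: continuous_on_subset)
  then obtain d where d: "d > 0" "\<forall>x\<in>Q. \<forall>x'\<in>Q. dist x' x < d \<longrightarrow> dist (w x') (w x) < e"
    using assms(5) unfolding uniformly_continuous_on_def by metis
  have "dist (w p) (w q) < e" if pq: "dist p q < min d 1" for p q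
  proof -
    obtain a where a: "p + a \<in> cbox (0,0) (\<bar>b/c\<bar>, b)" "\<forall>q. w (q + a) = w q"
      using per_reduce[OF assms(3,4), of p] assms(1) by blast
    have pQ: "p + a \<in> Q" using a(1) unfolding Q_def by (auto simp: cbox_Pair_eq)
    have dd: "dist (q + a) (p + a) < min d 1" using pq by (simp add: dist_commute dist_norm)
    have "dist (fst (q + a)) (fst (p + a)) < 1" "dist (snd (q + a)) (snd (p + a)) < 1"
      using dd dist_fst_le[of "q+a" "p+a"] dist_snd_le[of "q+a" "p+a"] by linarith+
    then have qQ: "q + a \<in> Q" using a(1) unfolding Q_def
      by (cases "p + a", cases "q + a") (auto simp: cbox_Pair_eq dist_real_def)
    have "dist (w (q + a)) (w (p + a)) < e" using d(2) pQ qQ dd by auto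
    then show ?thesis using a(2) by (simp add: dist_commute)
  qed
  then show ?thesis using d(1) by (intro exI[of _ "min d 1"]) auto
qed

lemma W_cont: "u \<in> W b c \<Longrightarrow> continuous_on UNIV u"
  unfolding W_iff
  by (meson continuous_at_imp_continuous_on differentiable_imp_continuous_within)

lemma c1norm_bound:
  assumes "\<forall>p. norm (w p) \<le> A" "\<forall>p. norm (pd_t w p) \<le> B" "\<forall>p. norm (pd_x w p) \<le> C"
  shows "0 \<le> c1norm w \<and> c1norm w \<le> A + B + C"
proof -
  have b1: "bdd_above (range (\<lambda>p. norm (w p)))" using assms(1) by (intro bdd_aboveI2[where M=A]) blast
  have b2: "bdd_above (range (\<lambda>p. norm (pd_t w p)))" using assms(2) by (intro bdd_aboveI2[where M=B]) blast
  have b3: "bdd_above (range (\<lambda>p. norm (pd_x w p)))" using assms(3) by (intro bdd_aboveI2[where M=C]) blast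
  have "0 \<le> (SUP p. norm (w p))" using cSUP_upper[OF UNIV_I b1] norm_ge_zero order_trans by blast
  moreover have "0 \<le> (SUP p. norm (pd_t w p))" using cSUP_upper[OF UNIV_I b2] norm_ge_zero order_trans by blast
  moreover have "0 \<le> (SUP p. norm (pd_x w p))" using cSUP_upper[OF UNIV_I b3] norm_ge_zero order_trans by blast
  moreover have "(SUP p. norm (w p)) \<le> A" using assms by (intro cSUP_least) auto
  moreover have "(SUP p. norm (pd_t w p)) \<le> B" using assms by (intro cSUP_least) auto
  moreover have "(SUP p. norm (pd_x w p)) \<le> C" using assms by (intro cSUP_least) auto
  ultimately show ?thesis unfolding c1norm_def by linarith
qed

lemma W_bounds:
  assumes "v \<in> W b c" "c \<noteq> 0" "b > 0"
  shows "\<exists>M. \<forall>p. norm (v p) \<le> M \<and> norm (pd_t v p) \<le> M \<and> norm (pd_x v p) \<le> M"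
proof -
  obtain M1 where "\<forall>p. norm (v p) \<le> M1"
    using per_bounded[of b c v] assms W_cont unfolding W_iff by blast
  moreover obtain M2 where "\<forall>p. norm (pd_t v p) \<le> M2"
    using per_bounded[of b c "pd_t v"] assms per_pd unfolding W_iff by blast
  moreover obtain M3 where "\<forall>p. norm (pd_x v p) \<le> M3"
    using per_bounded[of b c "pd_x v"] assms per_pd unfolding W_iff by blast
  ultimately show ?thesis
    by (intro exI[of _ "max M1 (max M2 M3)"]) (meson max.coboundedI1 max.coboundedI2 order_trans)
qed

lemma stepA:
  assumes F: "frechet_on_W b c S u D" and v: "v \<in> W b c" and cb: "c \<noteq> 0" "b > 0"
  shows "((\<lambda>\<epsilon>. S (\<lambda>p. u p + \<epsilon> *\<^sub>R v p)) has_real_derivative D v) (at 0)"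
proof -
  obtain M0 where M0: "\<forall>p. norm (v p) \<le> M0 \<and> norm (pd_t v p) \<le> M0 \<and> norm (pd_x v p) \<le> M0"
    using W_bounds[OF v cb] by blast
  define M where "M = 3 * max M0 0 + 1"
  have M: "M > 0" unfolding M_def by simp
  have dv: "\<forall>p. v differentiable (at p)" using v unfolding W_iff by blast
  have nrm: "0 \<le> c1norm (\<lambda>p. e *\<^sub>R v p) \<and> c1norm (\<lambda>p. e *\<^sub>R v p) \<le> \<bar>e\<bar> * M" for e
  proof -
    have "0 \<le> c1norm (\<lambda>p. e *\<^sub>R v p) \<and> c1norm (\<lambda>p. e *\<^sub>R v p) \<le> \<bar>e\<bar> * max M0 0 + \<bar>e\<bar> * max M0 0 + \<bar>e\<bar> * max M0 0"
      using M0 dv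
      by (intro c1norm_bound) (auto simp: pd_t_scale pd_x_scale intro!: mult_left_mono max.coboundedI1)
    then show ?thesis unfolding M_def by (auto simp: algebra_simps)
  qed
  have lin: "D (\<lambda>p. e *\<^sub>R v p) = e * D v" for e using F v unfolding frechet_on_W_def by blast
  have W': "(\<lambda>p. e *\<^sub>R v p) \<in> W b c" for e using W_scale[OF v] .
  have app: "\<forall>e>0. \<exists>\<delta>>0. \<forall>w\<in>W b c. c1norm w < \<delta> \<longrightarrow>
          \<bar>S (\<lambda>p. u p + w p) - S u - D w\<bar> \<le> e * c1norm w"
    using F unfolding frechet_on_W_def by blast
  have S0: "S (\<lambda>p. u p + 0 *\<^sub>R v p) = S u" by simp
  show ?thesis unfolding has_field_derivative_iff LIM_eq
  proof (intro allI impI)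
    fix r :: real assume r: "r > 0"
    obtain \<delta> where \<delta>: "\<delta> > 0" "\<forall>w\<in>W b c. c1norm w < \<delta> \<longrightarrow>
          \<bar>S (\<lambda>p. u p + w p) - S u - D w\<bar> \<le> (r / (2 * M)) * c1norm w"
      using app r M by (metis divide_pos_pos mult_pos_pos zero_less_numeral)
    show "\<exists>s>0. \<forall>x. x \<noteq> 0 \<and> norm (x - 0) < s \<longrightarrow>
        norm ((S (\<lambda>p. u p + x *\<^sub>R v p) - S (\<lambda>p. u p + 0 *\<^sub>R v p)) / (x - 0) - D v) < r"
    proof (intro exI[of _ "\<delta> / M"] conjI allI impI)
      show "\<delta> / M > 0" using \<delta> M by simp
      fix x :: real assume x: "x \<noteq> 0 \<and> norm (x - 0) < \<delta> / M"
      have cx: "c1norm (\<lambda>p. x *\<^sub>R v p) < \<delta>"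
        using nrm[of x] x M by (simp add: field_simps)
      have "\<bar>S (\<lambda>p. u p + x *\<^sub>R v p) - S u - x * D v\<bar> \<le> (r / (2 * M)) * c1norm (\<lambda>p. x *\<^sub>R v p)"
        using \<delta>(2) W' cx lin by metis
      also have "\<dots> \<le> (r / (2 * M)) * (\<bar>x\<bar> * M)"
        using nrm[of x] r M by (intro mult_left_mono) auto
      also have "\<dots> = \<bar>x\<bar> * (r / 2)" using M by (simp add: field_simps)
      finally have h: "\<bar>S (\<lambda>p. u p + x *\<^sub>R v p) - S u - x * D v\<bar> \<le> \<bar>x\<bar> * (r / 2)" .
      have "(S (\<lambda>p. u p + x *\<^sub>R v p) - S u) / x - D v = (S (\<lambda>p. u p + x *\<^sub>R v p) - S u - x * D v) / x"
        using x by (simp add: field_simps)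
      then have "\<bar>(S (\<lambda>p. u p + x *\<^sub>R v p) - S u) / x - D v\<bar> \<le> r / 2"
        using h x by (simp add: abs_divide divide_le_eq mult.commute)
      then show "norm ((S (\<lambda>p. u p + x *\<^sub>R v p) - S (\<lambda>p. u p + 0 *\<^sub>R v p)) / (x - 0) - D v) < r"
        using r by (simp add: S0)
    qed
  qed
qed



lemma periodic_shift_int:
  fixes g :: "real \<Rightarrow> 'a::banach"
  assumes P: "P > 0" and per: "\<forall>y. g (y + P) = g y"
  shows "integral {0..P} (\<lambda>x. g (x + a)) = integral {0..P} g"
proof -
  have "integral {0..P} (\<lambda>x. g (x + a)) = integral {0..P} (g \<circ> (+) a)"
    by (simp add: o_def add.commute)
  also have "\<dots> = integral {a..a+P} g" using integral_shift_Icc_real[of 0 P g a] by (simp add: add.commute)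
  also have "\<dots> = integral {0..P} g" using periodic_integral_pos[OF P per] .
  finally show ?thesis .
qed

lemma oint_shift_periodic:
  fixes I :: "real \<Rightarrow> real"
  assumes T: "T \<noteq> 0" and per: "\<forall>y. I (y + T) = I y"
  shows "oint 0 T (\<lambda>t. I (t + s)) = oint 0 T I"
proof (cases "T > 0")
  case True
  then show ?thesis unfolding oint_def using periodic_shift_int[OF True per] by simp
next
  case False
  then have Tn: "T < 0" using T by simp
  have A: "\<bar>T\<bar> = -T" using Tn by simp
  have "integral {T..0} (\<lambda>t. I (t + s)) = integral {T..0} (I \<circ> (+) s)"
    by (simp add: o_def add.commute)
  also have "\<dots> = integral {s + T..s + T + \<bar>T\<bar>} I"
    using integral_shift_Icc_real[of T 0 I s] A by (simp add: add.commute)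
  also have "\<dots> = integral {0..\<bar>T\<bar>} I" using periodic_integral[OF T per] by blast
  also have "\<dots> = integral {T..T + \<bar>T\<bar>} I" using periodic_integral[OF T per] by metis
  also have "\<dots> = integral {T..0} I" using A by simp
  finally show ?thesis unfolding oint_def using Tn by simp
qed

lemma oint_const: "oint 0 T (\<lambda>t. k) = T * k"
  unfolding oint_def by auto

lemma action_shift:
  assumes h: "h \<in> W b c" and cb: "c \<noteq> 0" "b > 0"
  shows "action b c L (\<lambda>q. h (q + (s, c * s))) = action b c L h"
proof -
  define Lh where "Lh = (\<lambda>p. L (h p, pd_t h p, pd_x h p))"
  have d: "\<forall>p. h differentiable (at p)" using h unfolding W_iff by blast
  have ph: "per b c h" using h unfolding W_iff by blast
  have pL: "per b c Lh" using ph per_pd[OF h] unfolding per_def Lh_def by simp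
  have 1: "action b c L (\<lambda>q. h (q + (s, c * s))) = oint 0 (b / c) (\<lambda>t. oint 0 b (\<lambda>x. Lh (t + s, x + c * s)))"
    unfolding action_def Lh_def using pd_t_shift[OF d] pd_x_shift[OF d] by simp
  define I where "I = (\<lambda>t. integral {0..b} (\<lambda>x. Lh (t, x)))"
  have in1: "oint 0 b (\<lambda>x. Lh (t + s, x + c * s)) = I (t + s)" for t
  proof -
    have "\<forall>y. Lh (t + s, y + b) = Lh (t + s, y)" using pL unfolding per_def by simp
    then show ?thesis unfolding oint_def I_def
      using periodic_shift_int[OF cb(2), of "\<lambda>x. Lh (t + s, x)" "c * s"] cb by simp
  qed
  have IP: "\<forall>y. I (y + b / c) = I y" using pL unfolding per_def I_def by simp
  have "action b c L (\<lambda>q. h (q + (s, c * s))) = oint 0 (b / c) (\<lambda>t. I (t + s))"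
    using 1 in1 by simp
  also have "\<dots> = oint 0 (b / c) I" using oint_shift_periodic[OF _ IP] cb by simp
  also have "\<dots> = action b c L h"
    unfolding action_def I_def Lh_def oint_def using cb by simp
  finally show ?thesis .
qed



lemma vd_periodic:
  fixes f :: "real \<Rightarrow> 'a::real_normed_vector"
  assumes per: "\<forall>y. f (y + b) = f y" and d: "f differentiable (at (\<xi> + b))"
  shows "vector_derivative f (at (\<xi> + b)) = vector_derivative f (at \<xi>)"
proof -
  have s: "((\<lambda>y. y + b) has_vector_derivative 1) (at \<xi>)"
    unfolding has_vector_derivative_def by (auto intro!: derivative_eq_intros)
  have fv: "(f has_vector_derivative vector_derivative f (at (\<xi> + b))) (at (\<xi> + b))"
    using d vector_derivative_works by blast
  have "((f \<circ> (\<lambda>y. y + b)) has_vector_derivative (1 *\<^sub>R vector_derivative f (at (\<xi> + b)))) (at \<xi>)"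
    using vector_diff_chain_at[OF s fv] .
  moreover have "f \<circ> (\<lambda>y. y + b) = f" using per by auto
  ultimately have "(f has_vector_derivative vector_derivative f (at (\<xi> + b))) (at \<xi>)" by simp
  from vector_derivative_at[OF this] show ?thesis by simp
qed

lemma tw_deriv:
  fixes f :: "real \<Rightarrow> real^'d"
  assumes "f differentiable (at (x - c * t))"
  shows "((\<lambda>(t, x). f (x - c * t)) has_derivative
          (\<lambda>h. (snd h - c * fst h) *\<^sub>R vector_derivative f (at (x - c * t)))) (at (t, x))"
proof -
  define l where "l = (\<lambda>p::real\<times>real. snd p - c * fst p)"
  have dl: "(l has_derivative l) (at (t, x))" unfolding l_def
    by (auto intro!: derivative_eq_intros)
  have lv: "l (t, x) = x - c * t" unfolding l_def by simp
  have "(f has_vector_derivative vector_derivative f (at (l (t, x)))) (at (l (t, x)))"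
    using assms vector_derivative_works unfolding lv by blast
  then have df: "(f has_derivative (\<lambda>h. h *\<^sub>R vector_derivative f (at (l (t, x))))) (at (l (t, x)))"
    by (simp add: has_vector_derivative_def)
  have "((f \<circ> l) has_derivative ((\<lambda>h. h *\<^sub>R vector_derivative f (at (l (t, x)))) \<circ> l)) (at (t, x))"
    using diff_chain_at[OF dl df] .
  moreover have "f \<circ> l = (\<lambda>(t, x). f (x - c * t))" unfolding l_def by auto
  ultimately show ?thesis unfolding l_def by (simp add: o_def)
qed

lemma tw_in:
  fixes f :: "real \<Rightarrow> real^'d"
  assumes f: "f \<in> C1_per b" and cb: "c \<noteq> 0" "b > 0"
  shows "(\<lambda>(t, x). f (x - c * t)) \<in> Sigma_tw b c"
    and "pd_t (\<lambda>(t, x). f (x - c * t)) (t, x) = - c *\<^sub>R vector_derivative f (at (x - c * t))"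
    and "pd_x (\<lambda>(t, x). f (x - c * t)) (t, x) = vector_derivative f (at (x - c * t))"
proof -
  have fp: "\<forall>y. f (y + b) = f y" and fd: "\<forall>y. f differentiable (at y)"
    and fc: "continuous_on UNIV (\<lambda>\<xi>. vector_derivative f (at \<xi>))"
    using f unfolding C1_per_def by auto
  let ?U = "\<lambda>(t, x). f (x - c * t)"
  have fdU: "frechet_derivative ?U (at (t, x)) = (\<lambda>h. (snd h - c * fst h) *\<^sub>R vector_derivative f (at (x - c * t)))" for t x
    by (rule frechet_derivative_at[OF tw_deriv[OF fd[rule_format]], symmetric])
  have pt: "pd_t ?U (t, x) = - c *\<^sub>R vector_derivative f (at (x - c * t))" for t x
    unfolding pd_t_def fdU by simp
  have px: "pd_x ?U (t, x) = vector_derivative f (at (x - c * t))" for t x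
    unfolding pd_x_def fdU by simp
  show "pd_t ?U (t, x) = - c *\<^sub>R vector_derivative f (at (x - c * t))" by (rule pt)
  show "pd_x ?U (t, x) = vector_derivative f (at (x - c * t))" by (rule px)
  have cl: "continuous_on UNIV (\<lambda>p::real\<times>real. snd p - c * fst p)" by (intro continuous_intros)
  have cf: "continuous_on UNIV (\<lambda>p::real\<times>real. vector_derivative f (at (snd p - c * fst p)))"
    using continuous_on_compose[OF cl continuous_on_subset[OF fc subset_UNIV]]
    by (simp add: o_def)
  have "pd_t ?U = (\<lambda>p. - c *\<^sub>R vector_derivative f (at (snd p - c * fst p)))"
  proof (rule ext)
    fix p :: "real \<times> real"
    obtain t x where p: "p = (t, x)" by fastforce
    show "pd_t ?U p = - c *\<^sub>R vector_derivative f (at (snd p - c * fst p))" unfolding p pt by simp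
  qed
  moreover have "continuous_on UNIV (\<lambda>p::real\<times>real. - c *\<^sub>R vector_derivative f (at (snd p - c * fst p)))"
    using cf by (intro continuous_intros)
  ultimately have ct: "continuous_on UNIV (pd_t ?U)" by simp
  have "pd_x ?U = (\<lambda>p. vector_derivative f (at (snd p - c * fst p)))"
  proof (rule ext)
    fix p :: "real \<times> real"
    obtain t x where p: "p = (t, x)" by fastforce
    show "pd_x ?U p = vector_derivative f (at (snd p - c * fst p))" unfolding p px by simp
  qed
  then have cx: "continuous_on UNIV (pd_x ?U)" using cf by simp
  have dU: "\<forall>p. ?U differentiable (at p)"
  proof
    fix p :: "real \<times> real"
    obtain t x where p: "p = (t, x)" by fastforce
    show "?U differentiable (at p)" unfolding p using tw_deriv[OF fd[rule_format]] by (rule differentiableI)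
  qed
  have "f (x - c * (t + b / c)) = f (x - c * t)" for t x
  proof -
    have e: "x - c * (t + b / c) + b = x - c * t" using cb by (simp add: algebra_simps)
    have "f (x - c * (t + b / c) + b) = f (x - c * (t + b / c))" using fp by blast
    then show ?thesis unfolding e by simp
  qed
  moreover have "f (x + b - c * t) = f (x - c * t)" for t x
  proof -
    have e: "x + b - c * t = x - c * t + b" by simp
    show ?thesis unfolding e using fp by blast
  qed
  ultimately have "per b c ?U" unfolding per_def by simp
  then have "?U \<in> W b c" using dU ct cx unfolding W_iff by blast
  moreover have "\<forall>s t x. ?U (t + s, x + c * s) = ?U (t, x)" by (simp add: algebra_simps)
  ultimately show "?U \<in> Sigma_tw b c" unfolding Sigma_tw_def by blast
qed

lemma tw_action:
  fixes f :: "real \<Rightarrow> real^'d"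
  assumes f: "f \<in> C1_per b" and cb: "c \<noteq> 0" "b > 0"
  shows "action b c L (\<lambda>(t, x). f (x - c * t))
      = (b / c) * integral {0..b} (\<lambda>\<xi>. L (f \<xi>, - c *\<^sub>R vector_derivative f (at \<xi>), vector_derivative f (at \<xi>)))"
proof -
  have fp: "\<forall>y. f (y + b) = f y" and fd: "\<forall>y. f differentiable (at y)"
    using f unfolding C1_per_def by auto
  define g where "g = (\<lambda>\<xi>. L (f \<xi>, - c *\<^sub>R vector_derivative f (at \<xi>), vector_derivative f (at \<xi>)))"
  have gp: "\<forall>y. g (y + b) = g y"
  proof
    fix y
    have "vector_derivative f (at (y + b)) = vector_derivative f (at y)"
      by (rule vd_periodic[OF fp fd[rule_format]])
    then show "g (y + b) = g y" unfolding g_def using fp by simp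
  qed
  have "action b c L (\<lambda>(t, x). f (x - c * t)) = oint 0 (b / c) (\<lambda>t. oint 0 b (\<lambda>x. g (x + (- c * t))))"
    unfolding action_def g_def using tw_in(2,3)[OF f cb] by simp
  also have "\<dots> = oint 0 (b / c) (\<lambda>t. integral {0..b} g)"
  proof -
    have "oint 0 b (\<lambda>x. g (x + (- c * t))) = integral {0..b} g" for t
      unfolding oint_def using periodic_shift_int[OF cb(2) gp, of "- c * t"] cb by simp
    then show ?thesis by simp
  qed
  also have "\<dots> = (b / c) * integral {0..b} g" by (rule oint_const)
  finally show ?thesis unfolding g_def .
qed

lemma tw_rep:
  fixes u :: "real \<times> real \<Rightarrow> real^'d"
  assumes u: "u \<in> Sigma_tw b c" and cb: "c \<noteq> 0" "b > 0"
  shows "\<exists>f\<in>C1_per b. u = (\<lambda>(t, x). f (x - c * t))"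
proof -
  have uW: "u \<in> W b c" and us: "\<forall>s t x. u (t + s, x + c * s) = u (t, x)"
    using u unfolding Sigma_tw_def by auto
  have d: "\<forall>p. u differentiable (at p)" using uW unfolding W_iff by blast
  have pu: "per b c u" using uW unfolding W_iff by blast
  define f where "f = (\<lambda>\<xi>. u (0, \<xi>))"
  have "u (t, x) = f (x - c * t)" for t x
  proof -
    have "u (0 + t, (x - c * t) + c * t) = u (0, x - c * t)" using us by blast
    then show ?thesis unfolding f_def by simp
  qed
  then have eq: "u = (\<lambda>(t, x). f (x - c * t))" by auto
  have vd: "(f has_vector_derivative pd_x u (0, \<xi>)) (at \<xi>)" for \<xi>
  proof -
    have s: "((\<lambda>y. (0::real, y)) has_vector_derivative (0, 1)) (at \<xi>)"
      unfolding has_vector_derivative_def by (auto intro!: derivative_eq_intros)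
    have du: "(u has_derivative frechet_derivative u (at (0, \<xi>))) (at (0, \<xi>) within (\<lambda>y. (0::real, y)) ` UNIV)"
      using d frechet_derivative_works has_derivative_at_withinI by blast
    have "((u \<circ> (\<lambda>y. (0::real, y))) has_vector_derivative frechet_derivative u (at (0, \<xi>)) (0, 1)) (at \<xi>)"
      using vector_derivative_diff_chain_within[OF s du] by simp
    then show ?thesis unfolding f_def pd_x_def by (simp add: o_def)
  qed
  have "f \<in> C1_per b"
  proof -
    have "\<forall>\<xi>. f (\<xi> + b) = f \<xi>" using pu unfolding per_def f_def by simp
    moreover have "\<forall>\<xi>. f differentiable (at \<xi>)" using vd differentiableI_vector by blast
    moreover have eqv: "\<And>\<xi>. vector_derivative f (at \<xi>) = pd_x u (0, \<xi>)"
      using vd vector_derivative_at by blast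
    moreover have "continuous_on UNIV (\<lambda>\<xi>. vector_derivative f (at \<xi>))"
      unfolding eqv
    proof -
      have c0: "continuous_on UNIV (\<lambda>\<xi>::real. (0::real, \<xi>))" by (intro continuous_intros)
      have "continuous_on UNIV (pd_x u)" using uW unfolding W_iff by blast
      then show "continuous_on UNIV (\<lambda>\<xi>. pd_x u (0, \<xi>))" using continuous_on_compose[OF c0 continuous_on_subset[OF _ subset_UNIV]]
        by (simp add: o_def)
    qed
    ultimately show ?thesis unfolding C1_per_def by blast
  qed
  then show ?thesis using eq by blast
qed



lemma integral_split_sum:
  fixes \<phi> :: "real \<Rightarrow> 'a::banach"
  assumes cont: "continuous_on UNIV \<phi>" and h: "h \<ge> 0"
  shows "integral {0..real n * h} \<phi> = (\<Sum>k<n. integral {real k * h..real (Suc k) * h} \<phi>)"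
proof (induction n)
  case 0 then show ?case by simp
next
  case (Suc n)
  have i: "\<phi> integrable_on {0..real (Suc n) * h}"
    by (rule integrable_continuous_interval) (rule continuous_on_subset[OF cont subset_UNIV])
  have "integral {0..real (Suc n) * h} \<phi> = integral {0..real n * h} \<phi> + integral {real n * h..real (Suc n) * h} \<phi>"
    using Henstock_Kurzweil_Integration.integral_combine[OF _ _ i, of "real n * h"] h
    by (simp add: mult_right_mono)
  then show ?case using Suc by simp
qed

lemma riemann:
  fixes w :: "real \<times> real \<Rightarrow> 'a::banach"
  assumes uc: "\<forall>e>0. \<exists>d>0. \<forall>p q. dist p q < d \<longrightarrow> dist (w p) (w q) < e"
    and cont: "continuous_on UNIV w" and P: "P > 0" and e: "e > 0"
  shows "\<exists>N0. \<forall>N\<ge>N0. N > 0 \<and> (\<forall>p. norm ((1 / real N) *\<^sub>R (\<Sum>k<N. w (p + (real k * (P / real N), c * (real k * (P / real N)))))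
             - (1 / P) *\<^sub>R integral {0..P} (\<lambda>s. w (p + (s, c * s)))) \<le> e)"
proof -
  obtain d where d: "d > 0" "\<forall>p q. dist p q < d \<longrightarrow> dist (w p) (w q) < e" using uc e by blast
  define N0 where "N0 = nat (ceiling (P * (1 + \<bar>c\<bar>) / d)) + 1"
  have "\<forall>N\<ge>N0. N > 0 \<and> (\<forall>p. norm ((1 / real N) *\<^sub>R (\<Sum>k<N. w (p + (real k * (P / real N), c * (real k * (P / real N)))))
             - (1 / P) *\<^sub>R integral {0..P} (\<lambda>s. w (p + (s, c * s)))) \<le> e)"
  proof (intro allI impI conjI)
    fix N assume N: "N0 \<le> N"
    then show Npos: "N > 0" unfolding N0_def by simp
    define h where "h = P / real N"
    have h0: "h > 0" using P Npos unfolding h_def by simp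
    have "P * (1 + \<bar>c\<bar>) / d \<le> real N0 - 1" unfolding N0_def by linarith
    also have "\<dots> < real N" using N by simp
    finally have "P * (1 + \<bar>c\<bar>) / d < real N" .
    then have "P * (1 + \<bar>c\<bar>) < real N * d" using d by (simp add: divide_less_eq)
    then have hd: "h * (1 + \<bar>c\<bar>) < d" unfolding h_def using Npos by (simp add: field_simps)
    have PN: "P = real N * h" unfolding h_def using Npos by simp
    {
      fix p
      define \<phi> where "\<phi> = (\<lambda>s. w (p + (s, c * s)))"
      have c\<phi>: "continuous_on UNIV \<phi>" unfolding \<phi>_def
        by (rule continuous_on_compose2[OF cont]) (auto intro!: continuous_intros)
      have bnd: "norm (integral {real k * h..real (Suc k) * h} \<phi> - h *\<^sub>R \<phi> (real k * h)) \<le> e * h" for k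
      proof -
        have lo: "real k * h \<le> real (Suc k) * h" using h0 by simp
        have eq: "integral {real k * h..real (Suc k) * h} (\<lambda>s. \<phi> s - \<phi> (real k * h))
            = integral {real k * h..real (Suc k) * h} \<phi> - h *\<^sub>R \<phi> (real k * h)"
          using lo
          by (subst integral_diff)
             (auto intro!: integrable_continuous_interval continuous_on_subset[OF c\<phi>] simp: algebra_simps)
        have nb: "norm (integral {real k * h..real (Suc k) * h} (\<lambda>s. \<phi> s - \<phi> (real k * h))) \<le> e * (real (Suc k) * h - real k * h)"
        proof (rule integral_bound[OF lo])
          show "continuous_on {real k * h..real (Suc k) * h} (\<lambda>s. \<phi> s - \<phi> (real k * h))"
            by (intro continuous_intros continuous_on_subset[OF c\<phi>]) auto
          fix s assume s: "s \<in> {real k * h..real (Suc k) * h}"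
          have "dist (p + (s, c * s)) (p + (real k * h, c * (real k * h))) \<le> \<bar>s - real k * h\<bar> + \<bar>c\<bar> * \<bar>s - real k * h\<bar>"
            using norm_Pair_le[of "s - real k * h" "c * s - c * (real k * h)"]
            by (simp add: dist_norm abs_mult right_diff_distrib[symmetric])
          also have "\<dots> = (1 + \<bar>c\<bar>) * \<bar>s - real k * h\<bar>" by (simp add: algebra_simps)
          also have "\<dots> \<le> (1 + \<bar>c\<bar>) * h" using s by (intro mult_left_mono) (auto simp: algebra_simps)
          finally have "dist (p + (s, c * s)) (p + (real k * h, c * (real k * h))) < d" using hd by (simp add: mult.commute)
          then show "norm (\<phi> s - \<phi> (real k * h)) \<le> e" using d(2) unfolding \<phi>_def dist_norm
            by (metis less_imp_le)
        qed
        have ar: "e * (real (Suc k) * h - real k * h) = e * h" by (simp add: algebra_simps)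
        show ?thesis using eq nb ar by metis
      qed
      have "integral {0..P} \<phi> = (\<Sum>k<N. integral {real k * h..real (Suc k) * h} \<phi>)"
        using integral_split_sum[OF c\<phi>, of h N] h0 PN by simp
      then have "integral {0..P} \<phi> - h *\<^sub>R (\<Sum>k<N. \<phi> (real k * h))
          = (\<Sum>k<N. integral {real k * h..real (Suc k) * h} \<phi> - h *\<^sub>R \<phi> (real k * h))"
        by (simp add: sum_subtractf scaleR_sum_right)
      then have "norm (integral {0..P} \<phi> - h *\<^sub>R (\<Sum>k<N. \<phi> (real k * h))) \<le> (\<Sum>k<N. e * h)"
        using bnd by (metis (no_types, lifting) sum_norm_le)
      also have "\<dots> = e * P" using PN by simp
      finally have B: "norm (integral {0..P} \<phi> - h *\<^sub>R (\<Sum>k<N. \<phi> (real k * h))) \<le> e * P" .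
      have "(1 / real N) *\<^sub>R (\<Sum>k<N. \<phi> (real k * h)) - (1 / P) *\<^sub>R integral {0..P} \<phi>
          = - (1 / P) *\<^sub>R (integral {0..P} \<phi> - h *\<^sub>R (\<Sum>k<N. \<phi> (real k * h)))"
        using P Npos unfolding h_def by (simp add: algebra_simps scaleR_diff_right)
      then have "norm ((1 / real N) *\<^sub>R (\<Sum>k<N. \<phi> (real k * h)) - (1 / P) *\<^sub>R integral {0..P} \<phi>)
          = (1 / P) * norm (integral {0..P} \<phi> - h *\<^sub>R (\<Sum>k<N. \<phi> (real k * h)))"
        using P by simp
      also have "\<dots> \<le> (1 / P) * (e * P)" using B P by (intro mult_left_mono) auto
      also have "\<dots> = e" using P by simp
      finally have R: "norm ((1 / real N) *\<^sub>R (\<Sum>k<N. \<phi> (real k * h)) - (1 / P) *\<^sub>R integral {0..P} \<phi>) \<le> e" .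
      show "norm ((1 / real N) *\<^sub>R (\<Sum>k<N. w (p + (real k * (P / real N), c * (real k * (P / real N)))))
             - (1 / P) *\<^sub>R integral {0..P} (\<lambda>s. w (p + (s, c * s)))) \<le> e"
        using R unfolding \<phi>_def h_def by simp
    }
  qed
  then show ?thesis by blast
qed



lemma D_add: "frechet_on_W b c S u D \<Longrightarrow> v \<in> W b c \<Longrightarrow> w \<in> W b c \<Longrightarrow> D (\<lambda>p. v p + w p) = D v + D w"
  unfolding frechet_on_W_def by blast
lemma D_scale: "frechet_on_W b c S u D \<Longrightarrow> v \<in> W b c \<Longrightarrow> D (\<lambda>p. a *\<^sub>R v p) = a * D v"
  unfolding frechet_on_W_def by blast

lemma D_sum:
  assumes F: "frechet_on_W b c S u D" and K: "finite K" and f: "\<And>k. k \<in> K \<Longrightarrow> f k \<in> W b c"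
  shows "D (\<lambda>q. \<Sum>k\<in>K. f k q) = (\<Sum>k\<in>K. D (f k))"
  using K f
proof (induction K rule: finite_induct)
  case empty
  have "D (\<lambda>p. 0 *\<^sub>R (0::real^'a)) = 0 * D (\<lambda>p. 0)" using D_scale[OF F W_zero] .
  then show ?case by simp
next
  case (insert k K)
  have "D (\<lambda>q. f k q + (\<Sum>k\<in>K. f k q)) = D (f k) + D (\<lambda>q. \<Sum>k\<in>K. f k q)"
    using insert by (intro D_add[OF F]) (auto intro!: W_sum)
  then show ?case using insert by simp
qed

lemma D_shift_inv:
  assumes F: "frechet_on_W b c (action b c L) u D" and u: "u \<in> Sigma_tw b c" and v: "v \<in> W b c"
    and cb: "c \<noteq> 0" "b > 0"
  shows "D (\<lambda>q. v (q + (s, c * s))) = D v"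
proof -
  have uW: "u \<in> W b c" using u unfolding Sigma_tw_def by blast
  have us: "u (q + (s, c * s)) = u q" for q
  proof -
    obtain t x where q: "q = (t, x)" by fastforce
    have "\<forall>s t x. u (t + s, x + c * s) = u (t, x)" using u unfolding Sigma_tw_def by blast
    then have "u (t + s, x + c * s) = u (t, x)" by blast
    then show ?thesis unfolding q by simp
  qed
  have eqf: "(\<lambda>\<epsilon>. action b c L (\<lambda>p. u p + \<epsilon> *\<^sub>R v (p + (s, c * s))))
           = (\<lambda>\<epsilon>. action b c L (\<lambda>p. u p + \<epsilon> *\<^sub>R v p))"
  proof
    fix \<epsilon>
    have e1: "(\<lambda>p. u p + \<epsilon> *\<^sub>R v (p + (s, c * s))) = (\<lambda>q. (\<lambda>p. u p + \<epsilon> *\<^sub>R v p) (q + (s, c * s)))"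
      by (rule ext) (simp only: us)
    have e2: "action b c L (\<lambda>q. (\<lambda>p. u p + \<epsilon> *\<^sub>R v p) (q + (s, c * s))) = action b c L (\<lambda>p. u p + \<epsilon> *\<^sub>R v p)"
      by (rule action_shift[OF W_lin[OF uW v] cb])
    show "action b c L (\<lambda>p. u p + \<epsilon> *\<^sub>R v (p + (s, c * s))) = action b c L (\<lambda>p. u p + \<epsilon> *\<^sub>R v p)"
      unfolding e1 by (rule e2)
  qed
  have d1: "((\<lambda>\<epsilon>. action b c L (\<lambda>p. u p + \<epsilon> *\<^sub>R v (p + (s, c * s)))) has_real_derivative D (\<lambda>q. v (q + (s, c * s)))) (at 0)"
    using stepA[OF F W_shift[OF v] cb] .
  have d2: "((\<lambda>\<epsilon>. action b c L (\<lambda>p. u p + \<epsilon> *\<^sub>R v p)) has_real_derivative D v) (at 0)"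
    using stepA[OF F v cb] .
  show ?thesis using d1 d2 unfolding eqf by (rule DERIV_unique)
qed

lemma D_sigma_zero:
  assumes F: "frechet_on_W b c (action b c L) u D" and st: "stationary_on (Sigma_tw b c) (action b c L) u"
    and w: "w \<in> Sigma_tw b c" and cb: "c \<noteq> 0" "b > 0"
  shows "D w = 0"
proof -
  have wW: "w \<in> W b c" using w unfolding Sigma_tw_def by blast
  have "((\<lambda>\<epsilon>. action b c L (\<lambda>p. u p + \<epsilon> *\<^sub>R w p)) has_real_derivative 0) (at 0)"
    using st w unfolding stationary_on_def by blast
  then show ?thesis using stepA[OF F wW cb] DERIV_unique by blast
qed

lemma orbit_int:
  fixes w :: "real \<times> real \<Rightarrow> 'a::banach"
  assumes pw: "per b c w" and cb: "c \<noteq> 0" "b > 0"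
  shows "integral {0..\<bar>b/c\<bar>} (\<lambda>s. w ((t, x) + (s, c * s))) = integral {0..\<bar>b/c\<bar>} (\<lambda>s. w (s, (x - c * t) + c * s))"
proof -
  define P where "P = \<bar>b/c\<bar>"
  have P: "P > 0" using cb unfolding P_def by simp
  define \<phi> where "\<phi> = (\<lambda>s. w (s, (x - c * t) + c * s))"
  have "\<forall>y. \<phi> (y + P) = \<phi> y"
  proof
    fix y
    have "\<phi> (y + P) = w ((y, (x - c * t) + c * y) + (P, c * P))" unfolding \<phi>_def by (simp add: algebra_simps)
    also have "\<dots> = \<phi> y" unfolding \<phi>_def P_def by (rule per_tau[OF pw cb])
    finally show "\<phi> (y + P) = \<phi> y" .
  qed
  from periodic_shift_int[OF P this, of t]
  have "integral {0..P} (\<lambda>s. \<phi> (s + t)) = integral {0..P} \<phi>" .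
  moreover have "(\<lambda>s. \<phi> (s + t)) = (\<lambda>s. w ((t, x) + (s, c * s)))"
    unfolding \<phi>_def by (auto simp: algebra_simps)
  ultimately show ?thesis unfolding P_def \<phi>_def by simp
qed

lemma orbit_vd:
  assumes v: "v \<in> W b c"
  shows "((\<lambda>s. v (q + (s, c * s))) has_vector_derivative (pd_t v (q + (s, c * s)) + c *\<^sub>R pd_x v (q + (s, c * s)))) (at s within S)"
proof -
  have d: "\<forall>p. v differentiable (at p)" using v unfolding W_iff by blast
  have s1: "((\<lambda>s. q + (s, c * s)) has_vector_derivative (1, c)) (at s within S)"
    unfolding has_vector_derivative_def by (auto intro!: derivative_eq_intros)
  have dv: "(v has_derivative frechet_derivative v (at (q + (s, c * s)))) (at (q + (s, c * s)) within (\<lambda>s. q + (s, c * s)) ` S)"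
    using d frechet_derivative_works has_derivative_at_withinI by blast
  have lin: "linear (frechet_derivative v (at (q + (s, c * s))))"
    using d frechet_derivative_works has_derivative_linear by blast
  have "frechet_derivative v (at (q + (s, c * s))) (1, c)
      = frechet_derivative v (at (q + (s, c * s))) ((1, 0) + c *\<^sub>R (0, 1))" by simp
  also have "\<dots> = pd_t v (q + (s, c * s)) + c *\<^sub>R pd_x v (q + (s, c * s))"
    unfolding pd_t_def pd_x_def by (simp only: linear_add[OF lin] linear_scale[OF lin])
  finally have e: "frechet_derivative v (at (q + (s, c * s))) (1, c) = pd_t v (q + (s, c * s)) + c *\<^sub>R pd_x v (q + (s, c * s))" .
  show ?thesis using vector_derivative_diff_chain_within[OF s1 dv] unfolding e by (simp add: o_def)
qed



lemma avg_C1: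
  assumes v: "v \<in> W b c" and cb: "c \<noteq> 0" "b > 0"
  defines "P \<equiv> \<bar>b/c\<bar>"
  shows "(\<lambda>\<xi>. (1/P) *\<^sub>R integral {0..P} (\<lambda>s. v (s, \<xi> + c * s))) \<in> C1_per b"
    and "vector_derivative (\<lambda>\<xi>. (1/P) *\<^sub>R integral {0..P} (\<lambda>s. v (s, \<xi> + c * s))) (at \<xi>)
         = (1/P) *\<^sub>R integral {0..P} (\<lambda>s. pd_x v (s, \<xi> + c * s))"
proof -
  have d: "\<forall>p. v differentiable (at p)" using v unfolding W_iff by blast
  have cv: "continuous_on UNIV v" using W_cont[OF v] .
  have cx: "continuous_on UNIV (pd_x v)" using v unfolding W_iff by blast
  have pv: "per b c v" using v unfolding W_iff by blast
  have cm: "continuous_on UNIV (\<lambda>z::real\<times>real. (snd z, fst z + c * snd z))" by (intro continuous_intros)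
  have cfx: "continuous_on UNIV (\<lambda>z::real\<times>real. pd_x v (snd z, fst z + c * snd z))"
    using continuous_on_compose[OF cm continuous_on_subset[OF cx subset_UNIV]] by (simp add: o_def)
  have cfv: "continuous_on UNIV (\<lambda>z::real\<times>real. v (snd z, fst z + c * snd z))"
    using continuous_on_compose[OF cm continuous_on_subset[OF cv subset_UNIV]] by (simp add: o_def)
  have eqc: "(\<lambda>(\<xi>, s). pd_x v (s, \<xi> + c * s)) = (\<lambda>z. pd_x v (snd z, fst z + c * snd z))" by auto
  have cfx2: "continuous_on (UNIV \<times> cbox 0 P) (\<lambda>(\<xi>, s). pd_x v (s, \<xi> + c * s))"
    unfolding eqc by (rule continuous_on_subset[OF cfx subset_UNIV])
  have cs: "continuous_on UNIV (\<lambda>s. v (s, \<xi> + c * s))" for \<xi>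
  proof -
    have "continuous_on UNIV (\<lambda>s::real. (\<xi>, s))" by (intro continuous_intros)
    from continuous_on_compose[OF this continuous_on_subset[OF cfv subset_UNIV]]
    show ?thesis by (simp add: o_def)
  qed
  have vdx: "((\<lambda>\<xi>. v (s, \<xi> + c * s)) has_vector_derivative pd_x v (s, \<xi> + c * s)) (at \<xi> within UNIV)" for \<xi> s
  proof -
    have s1: "((\<lambda>\<xi>. (s, \<xi> + c * s)) has_vector_derivative (0, 1)) (at \<xi>)"
      unfolding has_vector_derivative_def by (auto intro!: derivative_eq_intros)
    have dv: "(v has_derivative frechet_derivative v (at (s, \<xi> + c * s))) (at (s, \<xi> + c * s) within (\<lambda>\<xi>. (s, \<xi> + c * s)) ` UNIV)"
      using d frechet_derivative_works has_derivative_at_withinI by blast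
    show ?thesis using vector_derivative_diff_chain_within[OF s1 dv] unfolding pd_x_def by (simp add: o_def)
  qed
  have L: "((\<lambda>\<xi>. integral (cbox 0 P) (\<lambda>s. v (s, \<xi> + c * s))) has_vector_derivative
            integral (cbox 0 P) (\<lambda>s. pd_x v (s, \<xi> + c * s))) (at \<xi> within UNIV)" for \<xi>
  proof (rule leibniz_rule_vector_derivative[where f="\<lambda>\<xi> s. v (s, \<xi> + c * s)" and fx="\<lambda>\<xi> s. pd_x v (s, \<xi> + c * s)"])
    show "\<And>x t. x \<in> UNIV \<Longrightarrow> t \<in> cbox 0 P \<Longrightarrow> ((\<lambda>\<xi>. v (t, \<xi> + c * t)) has_vector_derivative pd_x v (t, x + c * t)) (at x within UNIV)"
      using vdx by blast
    show "\<And>x. x \<in> UNIV \<Longrightarrow> (\<lambda>s. v (s, x + c * s)) integrable_on cbox 0 P"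
      using integrable_continuous[OF continuous_on_subset[OF cs subset_UNIV]] by blast
    show "continuous_on (UNIV \<times> cbox 0 P) (\<lambda>(\<xi>, s). pd_x v (s, \<xi> + c * s))" by (rule cfx2)
  qed auto
  have L2: "((\<lambda>\<xi>. (1/P) *\<^sub>R integral {0..P} (\<lambda>s. v (s, \<xi> + c * s))) has_vector_derivative
            (1/P) *\<^sub>R integral {0..P} (\<lambda>s. pd_x v (s, \<xi> + c * s))) (at \<xi>)" for \<xi>
    using has_vector_derivative_scaleR[OF DERIV_const L[of \<xi>], of "1/P"] by simp
  show vd: "vector_derivative (\<lambda>\<xi>. (1/P) *\<^sub>R integral {0..P} (\<lambda>s. v (s, \<xi> + c * s))) (at \<xi>)
         = (1/P) *\<^sub>R integral {0..P} (\<lambda>s. pd_x v (s, \<xi> + c * s))" for \<xi>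
    using vector_derivative_at[OF L2] .
  have cG: "continuous_on UNIV (\<lambda>\<xi>. (1/P) *\<^sub>R integral {0..P} (\<lambda>s. pd_x v (s, \<xi> + c * s)))"
  proof -
    have "continuous_on UNIV (\<lambda>\<xi>. integral (cbox 0 P) (\<lambda>s. pd_x v (s, \<xi> + c * s)))"
      using integral_continuous_on_param[OF cfx2] by simp
    then show ?thesis by (intro continuous_intros) simp
  qed
  have per: "(1/P) *\<^sub>R integral {0..P} (\<lambda>s. v (s, \<xi> + b + c * s)) = (1/P) *\<^sub>R integral {0..P} (\<lambda>s. v (s, \<xi> + c * s))" for \<xi>
  proof -
    have "v (s, \<xi> + b + c * s) = v (s, \<xi> + c * s)" for s
    proof -
      have "v (s, (\<xi> + c * s) + b) = v (s, \<xi> + c * s)" using pv unfolding per_def by blast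
      then show ?thesis by (simp add: algebra_simps)
    qed
    then show ?thesis by simp
  qed
  have A: "\<forall>\<xi>. (\<lambda>\<xi>. (1/P) *\<^sub>R integral {0..P} (\<lambda>s. v (s, \<xi> + c * s))) (\<xi> + b)
      = (\<lambda>\<xi>. (1/P) *\<^sub>R integral {0..P} (\<lambda>s. v (s, \<xi> + c * s))) \<xi>"
    using per by simp
  have B: "\<forall>\<xi>. (\<lambda>\<xi>. (1/P) *\<^sub>R integral {0..P} (\<lambda>s. v (s, \<xi> + c * s))) differentiable (at \<xi>)"
    using L2 differentiableI_vector by blast
  have C: "continuous_on UNIV (\<lambda>\<xi>. vector_derivative (\<lambda>\<xi>. (1/P) *\<^sub>R integral {0..P} (\<lambda>s. v (s, \<xi> + c * s))) (at \<xi>))"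
    unfolding vd by (rule cG)
  show "(\<lambda>\<xi>. (1/P) *\<^sub>R integral {0..P} (\<lambda>s. v (s, \<xi> + c * s))) \<in> C1_per b"
    unfolding C1_per_def mem_Collect_eq using A B C by blast
qed



lemma orbit_cont:
  fixes w :: "real \<times> real \<Rightarrow> 'a::topological_space"
  assumes "continuous_on UNIV w"
  shows "continuous_on UNIV (\<lambda>s. w (q + (s, c * s)))"
proof -
  have "continuous_on UNIV (\<lambda>s::real. q + (s, c * s))" by (intro continuous_intros)
  from continuous_on_compose[OF this continuous_on_subset[OF assms subset_UNIV]]
  show ?thesis by (simp add: o_def)
qed

lemma orbit_ftc:
  assumes v: "v \<in> W b c" and cb: "c \<noteq> 0" "b > 0"
  defines "P \<equiv> \<bar>b/c\<bar>"
  shows "integral {0..P} (\<lambda>s. pd_t v (q + (s, c * s))) = - c *\<^sub>R integral {0..P} (\<lambda>s. pd_x v (q + (s, c * s)))"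
proof -
  have P: "P > 0" using cb unfolding P_def by simp
  have pv: "per b c v" using v unfolding W_iff by blast
  have ct: "continuous_on UNIV (pd_t v)" and cx: "continuous_on UNIV (pd_x v)" using v unfolding W_iff by blast+
  have "((\<lambda>s. pd_t v (q + (s, c * s)) + c *\<^sub>R pd_x v (q + (s, c * s))) has_integral
        (v (q + (P, c * P)) - v (q + (0, c * 0)))) {0..P}"
    using fundamental_theorem_of_calculus[of 0 P "\<lambda>s. v (q + (s, c * s))"] orbit_vd[OF v] P by simp
  moreover have "v (q + (P, c * P)) = v q" unfolding P_def by (rule per_tau[OF pv cb])
  moreover have "q + (0, c * 0) = q" by (cases q) simp
  ultimately have h0: "((\<lambda>s. pd_t v (q + (s, c * s)) + c *\<^sub>R pd_x v (q + (s, c * s))) has_integral 0) {0..P}"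
    by simp
  have i1: "(\<lambda>s. pd_t v (q + (s, c * s))) integrable_on {0..P}"
    by (rule integrable_continuous_interval) (rule continuous_on_subset[OF orbit_cont[OF ct] subset_UNIV])
  have i2: "(\<lambda>s. c *\<^sub>R pd_x v (q + (s, c * s))) integrable_on {0..P}"
    by (rule integrable_continuous_interval) (intro continuous_intros continuous_on_subset[OF orbit_cont[OF cx] subset_UNIV])
  have "integral {0..P} (\<lambda>s. pd_t v (q + (s, c * s))) + c *\<^sub>R integral {0..P} (\<lambda>s. pd_x v (q + (s, c * s))) = 0"
    using integral_add[OF i1 i2] integral_unique[OF h0] by simp
  then show ?thesis by (simp add: eq_neg_iff_add_eq_0)
qed

lemma D_zero:
  assumes F: "frechet_on_W b c (action b c L) u D" and u: "u \<in> Sigma_tw b c"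
    and st: "stationary_on (Sigma_tw b c) (action b c L) u" and v: "v \<in> W b c"
    and cb: "c \<noteq> 0" "b > 0"
  shows "D v = 0"
proof -
  define P where "P = \<bar>b/c\<bar>"
  have P: "P > 0" using cb unfolding P_def by simp
  define Fv where "Fv = (\<lambda>\<xi>. (1/P) *\<^sub>R integral {0..P} (\<lambda>s. v (s, \<xi> + c * s)))"
  define G where "G = (\<lambda>\<xi>. (1/P) *\<^sub>R integral {0..P} (\<lambda>s. pd_x v (s, \<xi> + c * s)))"
  have FC: "Fv \<in> C1_per b" using avg_C1(1)[OF v cb] unfolding Fv_def P_def .
  have FG: "vector_derivative Fv (at \<xi>) = G \<xi>" for \<xi>
    using avg_C1(2)[OF v cb] unfolding Fv_def G_def P_def .
  define vb where "vb = (\<lambda>(t, x). Fv (x - c * t))"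
  have vbS: "vb \<in> Sigma_tw b c" using tw_in(1)[OF FC cb] unfolding vb_def .
  have vbW: "vb \<in> W b c" using vbS unfolding Sigma_tw_def by blast
  have vbt: "pd_t vb (t, x) = - c *\<^sub>R G (x - c * t)" for t x
    using tw_in(2)[OF FC cb, of t x] FG unfolding vb_def by simp
  have vbx: "pd_x vb (t, x) = G (x - c * t)" for t x
    using tw_in(3)[OF FC cb, of t x] FG unfolding vb_def by simp
  have Dvb: "D vb = 0" by (rule D_sigma_zero[OF F st vbS cb])
  have pv: "per b c v" using v unfolding W_iff by blast
  have pt: "per b c (pd_t v)" and px: "per b c (pd_x v)" using per_pd[OF v] by auto
  have cv: "continuous_on UNIV v" by (rule W_cont[OF v])
  have ct: "continuous_on UNIV (pd_t v)" and cx: "continuous_on UNIV (pd_x v)" using v unfolding W_iff by blast+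
  have dv: "\<forall>p. v differentiable (at p)" using v unfolding W_iff by blast
  have I1: "vb (t, x) = (1/P) *\<^sub>R integral {0..P} (\<lambda>s. v ((t, x) + (s, c * s)))" for t x
    unfolding vb_def Fv_def P_def using orbit_int[OF pv cb, of t x] by simp
  have I2: "pd_x vb (t, x) = (1/P) *\<^sub>R integral {0..P} (\<lambda>s. pd_x v ((t, x) + (s, c * s)))" for t x
    unfolding vbx G_def P_def using orbit_int[OF px cb, of t x] by simp
  have I3: "pd_t vb (t, x) = (1/P) *\<^sub>R integral {0..P} (\<lambda>s. pd_t v ((t, x) + (s, c * s)))" for t x
  proof -
    have "pd_t vb (t, x) = - c *\<^sub>R ((1/P) *\<^sub>R integral {0..P} (\<lambda>s. pd_x v ((t, x) + (s, c * s))))"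
      unfolding vbt G_def P_def using orbit_int[OF px cb, of t x] by simp
    also have "\<dots> = (1/P) *\<^sub>R (- c *\<^sub>R integral {0..P} (\<lambda>s. pd_x v ((t, x) + (s, c * s))))"
      by simp
    also have "\<dots> = (1/P) *\<^sub>R integral {0..P} (\<lambda>s. pd_t v ((t, x) + (s, c * s)))"
      unfolding P_def using orbit_ftc[OF v cb, of "(t, x)"] by simp
    finally show ?thesis .
  qed
  have ucv: "\<forall>e>0. \<exists>d>0. \<forall>p q. dist p q < d \<longrightarrow> dist (v p) (v q) < e"
    using per_unif[OF pv cv cb] by blast
  have uct: "\<forall>e>0. \<exists>d>0. \<forall>p q. dist p q < d \<longrightarrow> dist (pd_t v p) (pd_t v q) < e"
    using per_unif[OF pt ct cb] by blast
  have ucx: "\<forall>e>0. \<exists>d>0. \<forall>p q. dist p q < d \<longrightarrow> dist (pd_x v p) (pd_x v q) < e"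
    using per_unif[OF px cx cb] by blast
  obtain K where K: "\<forall>w\<in>W b c. \<bar>D w\<bar> \<le> K * c1norm w" using F unfolding frechet_on_W_def by blast
  have main: "\<bar>D v\<bar> \<le> max K 0 * (3 * e)" if e: "e > 0" for e
  proof -
    obtain N1 where N1: "\<forall>N\<ge>N1. N > 0 \<and> (\<forall>p. norm ((1 / real N) *\<^sub>R (\<Sum>k<N. v (p + (real k * (P / real N), c * (real k * (P / real N)))))
             - (1 / P) *\<^sub>R integral {0..P} (\<lambda>s. v (p + (s, c * s)))) \<le> e)"
      using riemann[OF ucv cv P e] by blast
    obtain N2 where N2: "\<forall>N\<ge>N2. N > 0 \<and> (\<forall>p. norm ((1 / real N) *\<^sub>R (\<Sum>k<N. pd_t v (p + (real k * (P / real N), c * (real k * (P / real N)))))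
             - (1 / P) *\<^sub>R integral {0..P} (\<lambda>s. pd_t v (p + (s, c * s)))) \<le> e)"
      using riemann[OF uct ct P e] by blast
    obtain N3 where N3: "\<forall>N\<ge>N3. N > 0 \<and> (\<forall>p. norm ((1 / real N) *\<^sub>R (\<Sum>k<N. pd_x v (p + (real k * (P / real N), c * (real k * (P / real N)))))
             - (1 / P) *\<^sub>R integral {0..P} (\<lambda>s. pd_x v (p + (s, c * s)))) \<le> e)"
      using riemann[OF ucx cx P e] by blast
    define N where "N = max N1 (max N2 N3)"
    have R1: "N > 0" "\<forall>p. norm ((1 / real N) *\<^sub>R (\<Sum>k<N. v (p + (real k * (P / real N), c * (real k * (P / real N)))))
             - (1 / P) *\<^sub>R integral {0..P} (\<lambda>s. v (p + (s, c * s)))) \<le> e"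
      using N1 unfolding N_def by auto
    have R2: "\<forall>p. norm ((1 / real N) *\<^sub>R (\<Sum>k<N. pd_t v (p + (real k * (P / real N), c * (real k * (P / real N)))))
             - (1 / P) *\<^sub>R integral {0..P} (\<lambda>s. pd_t v (p + (s, c * s)))) \<le> e"
      using N2 unfolding N_def by auto
    have R3: "\<forall>p. norm ((1 / real N) *\<^sub>R (\<Sum>k<N. pd_x v (p + (real k * (P / real N), c * (real k * (P / real N)))))
             - (1 / P) *\<^sub>R integral {0..P} (\<lambda>s. pd_x v (p + (s, c * s)))) \<le> e"
      using N3 unfolding N_def by auto
    define tk where "tk = (\<lambda>k::nat. (real k * (P / real N), c * (real k * (P / real N))))"
    define sm where "sm = (\<lambda>q. \<Sum>k<N. v (q + tk k))"
    define vN where "vN = (\<lambda>q. (1 / real N) *\<^sub>R sm q)"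
    have shW: "(\<lambda>q. v (q + tk k)) \<in> W b c" for k by (rule W_shift[OF v])
    have shd: "(\<lambda>q. v (q + tk k)) differentiable (at p)" for k p using shW[of k] unfolding W_iff by blast
    have smW: "sm \<in> W b c" unfolding sm_def by (rule W_sum) (auto intro: shW)
    have smd: "sm differentiable (at p)" for p using smW unfolding W_iff by blast
    have vNW: "vN \<in> W b c" unfolding vN_def by (rule W_scale[OF smW])
    have vNd: "vN differentiable (at p)" for p using vNW unfolding W_iff by blast
    have vbd: "vb differentiable (at p)" for p using vbW unfolding W_iff by blast
    have vNt: "pd_t vN p = (1 / real N) *\<^sub>R (\<Sum>k<N. pd_t v (p + tk k))" for p
      unfolding vN_def using pd_t_scale[OF smd] pd_t_sum[of "{..<N}" "\<lambda>k q. v (q + tk k)", OF _ shd]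
        pd_t_shift[OF dv] unfolding sm_def by simp
    have vNx: "pd_x vN p = (1 / real N) *\<^sub>R (\<Sum>k<N. pd_x v (p + tk k))" for p
      unfolding vN_def using pd_x_scale[OF smd] pd_x_sum[of "{..<N}" "\<lambda>k q. v (q + tk k)", OF _ shd]
        pd_x_shift[OF dv] unfolding sm_def by simp
    define df where "df = (\<lambda>q. vN q + (-1) *\<^sub>R vb q)"
    have dfW: "df \<in> W b c" unfolding df_def by (rule W_lin[OF vNW vbW])
    have Dsm: "D sm = real N * D v"
    proof -
      have "D sm = (\<Sum>k<N. D (\<lambda>q. v (q + tk k)))" unfolding sm_def
        by (rule D_sum[OF F]) (auto intro: shW)
      also have "\<dots> = (\<Sum>k<N. D v)"
      proof (rule sum.cong)
        fix k show "D (\<lambda>q. v (q + tk k)) = D v" unfolding tk_def by (rule D_shift_inv[OF F u v cb])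
      qed simp
      finally show ?thesis by simp
    qed
    have Ddf: "D df = D v"
    proof -
      have "D df = D vN + D (\<lambda>q. (-1) *\<^sub>R vb q)" unfolding df_def
        by (rule D_add[OF F vNW W_scale[OF vbW]])
      also have "D (\<lambda>q. (-1) *\<^sub>R vb q) = (-1) * D vb" by (rule D_scale[OF F vbW])
      also have "D vN = (1 / real N) * D sm" unfolding vN_def by (rule D_scale[OF F smW])
      finally show ?thesis using Dsm Dvb R1(1) by simp
    qed
    have b1: "\<forall>p. norm (df p) \<le> e"
    proof
      fix p :: "real \<times> real"
      obtain t x where p: "p = (t, x)" by fastforce
      show "norm (df p) \<le> e" using R1(2)[rule_format, of p] unfolding df_def vN_def sm_def tk_def p I1
        by simp
    qed
    have b2: "\<forall>p. norm (pd_t df p) \<le> e"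
    proof
      fix p :: "real \<times> real"
      obtain t x where p: "p = (t, x)" by fastforce
      have "pd_t df p = pd_t vN p + (-1) *\<^sub>R pd_t vb p" unfolding df_def by (rule pd_t_lin[OF vNd vbd])
      then show "norm (pd_t df p) \<le> e" using R2[rule_format, of p] unfolding vNt tk_def p I3
        by simp
    qed
    have b3: "\<forall>p. norm (pd_x df p) \<le> e"
    proof
      fix p :: "real \<times> real"
      obtain t x where p: "p = (t, x)" by fastforce
      have "pd_x df p = pd_x vN p + (-1) *\<^sub>R pd_x vb p" unfolding df_def by (rule pd_x_lin[OF vNd vbd])
      then show "norm (pd_x df p) \<le> e" using R3[rule_format, of p] unfolding vNx tk_def p I2
        by simp
    qed
    have cn: "0 \<le> c1norm df \<and> c1norm df \<le> e + e + e" by (rule c1norm_bound[OF b1 b2 b3])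
    have "\<bar>D v\<bar> = \<bar>D df\<bar>" using Ddf by simp
    also have "\<dots> \<le> K * c1norm df" using K dfW by blast
    also have "\<dots> \<le> max K 0 * c1norm df" using cn by (intro mult_right_mono) auto
    also have "\<dots> \<le> max K 0 * (3 * e)" using cn by (intro mult_left_mono) auto
    finally show ?thesis .
  qed
  show "D v = 0"
  proof (rule ccontr)
    assume nz: "D v \<noteq> 0"
    define M where "M = max K 0 + 1"
    have M: "M > 0" unfolding M_def by simp
    define e where "e = \<bar>D v\<bar> / (3 * M)"
    have e0: "e > 0" using nz M unfolding e_def by simp
    have "\<bar>D v\<bar> \<le> max K 0 * (3 * e)" using main[OF e0] .
    also have "\<dots> < M * (3 * e)" unfolding M_def using e0 by (intro mult_strict_right_mono) auto
    also have "\<dots> = \<bar>D v\<bar>" unfolding e_def using M by simp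
    finally show False by simp
  qed
qed



theorem proposition3:
  fixes b c :: real and L :: "(real^'d) \<times> (real^'d) \<times> (real^'d) \<Rightarrow> real"
  assumes "c \<noteq> 0" and "b > 0"
    and "C1_on_W b c (action b c L)"
  shows "(\<forall>u\<in>Sigma_tw b c.
            stationary_on (W b c) (action b c L) u \<longleftrightarrow>
            stationary_on (Sigma_tw b c) (action b c L) u)
       \<and> (\<forall>u::real \<times> real \<Rightarrow> real^'d \<in> Sigma_tw b c. \<exists>f\<in>C1_per b. u = (\<lambda>(t, x). f (x - c * t)))
       \<and> (\<forall>f\<in>C1_per b. (\<lambda>(t, x). f (x - c * t)) \<in> Sigma_tw b c
            \<and> action b c L (\<lambda>(t, x). f (x - c * t))
              = (b / c) * integral {0..b}
                  (\<lambda>\<xi>. L (f \<xi>, - c *\<^sub>R vector_derivative f (at \<xi>), vector_derivative f (at \<xi>))))"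
proof -
  have cb: "c \<noteq> 0" "b > 0" using assms by auto
  obtain DF where DF: "\<forall>u\<in>W b c. frechet_on_W b c (action b c L) u (DF u)"
    using assms(3) unfolding C1_on_W_def by blast
  have SW: "Sigma_tw b c \<subseteq> W b c" unfolding Sigma_tw_def by blast
  have P1: "stationary_on (W b c) (action b c L) u \<longleftrightarrow> stationary_on (Sigma_tw b c) (action b c L) u"
    if u: "u \<in> Sigma_tw b c" for u :: "real \<times> real \<Rightarrow> real^'d"
  proof
    assume "stationary_on (W b c) (action b c L) u"
    then show "stationary_on (Sigma_tw b c) (action b c L) u"
      using u SW unfolding stationary_on_def by blast
  next
    assume st: "stationary_on (Sigma_tw b c) (action b c L) u"
    have uW: "u \<in> W b c" using u SW by blast
    have F: "frechet_on_W b c (action b c L) u (DF u)" using DF uW by blast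
    have "((\<lambda>\<epsilon>. action b c L (\<lambda>p. u p + \<epsilon> *\<^sub>R v p)) has_real_derivative 0) (at 0)"
      if v: "v \<in> W b c" for v
    proof -
      have "DF u v = 0" by (rule D_zero[OF F u st v cb])
      then show ?thesis using stepA[OF F v cb] by simp
    qed
    then show "stationary_on (W b c) (action b c L) u"
      unfolding stationary_on_def using uW by blast
  qed
  show ?thesis
    using P1 tw_rep[OF _ cb] tw_in(1)[OF _ cb] tw_action[OF _ cb] by blast
qed

end
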